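(* Let $Q$ be a quasi-ribbon tableau and let $\xi(Q)$ be the array obtained from $Q$ by first sliding every row leftwards so that its leftmost cell lies in column $1$, and then sliding all cells upwards along their columns until each column has its topmost cell in row $1$ and no gaps. Then $\xi(Q)$ is a Young tableau, and for every $i\ge1$ such that $f_i(Q)$ is defined, $\xi(f_i(Q))=\tilde f_i(\xi(Q))$.
   Context: A quasi-ribbon tableau of shape $\sigma=(\sigma_1,\dots,\sigma_r)$ is a filling with positive integers of the diagram having $\sigma_i$ cells in row $i$, the leftmost cell of row $i+1$ directly below the rightmost cell of row $i$, weakly increasing along rows and strictly increasing down columns. A Young tableau is a left-justified array with weakly decreasing row lengths, filled with positive integers weakly increasing along rows and strictly increasing down columns. The column reading of a (quasi-ribbon or Young) tableau reads columns left to right, each bottom to top; operators act on tableaux via their column readings (the result is again the column reading of a tableau of the same shape). Quasi-Kashiwara operator $f_i$ on a word $u$: undefined if $u$ contains a (not necessarily consecutive) subsequence $(i+1)\,i$ or no letter $i$; otherwise replaces the rightmost $i$ by $i+1$. Kashiwara operator $\tilde f_i$: replace each $i$ by $+$, each $i+1$ by $-$, delete other letters, then repeatedly delete factors $-+$ until the word is $+^{a}-^{b}$; if $a=0$ undefined, otherwise change the letter $i$ corresponding to the rightmost remaining $+$ into $i+1$. *)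

theory Defs
  imports Main
begin

section \<open>Tableaux as partial fillings of cells (row, column), 1-indexed\<close>

type_synonym tableau = "nat \<times> nat \<Rightarrow> nat option"

definition row_weak :: "tableau \<Rightarrow> bool" where
  "row_weak T \<longleftrightarrow> (\<forall>r c a b. T (r, c) = Some a \<longrightarrow> T (r, Suc c) = Some b \<longrightarrow> a \<le> b)"

definition col_strict :: "tableau \<Rightarrow> bool" where
  "col_strict T \<longleftrightarrow> (\<forall>r c a b. T (r, c) = Some a \<longrightarrow> T (Suc r, c) = Some b \<longrightarrow> a < b)"

definition pos_entries :: "tableau \<Rightarrow> bool" where
  "pos_entries T \<longleftrightarrow> (\<forall>p a. T p = Some a \<longrightarrow> 1 \<le> a)"

text \<open>Quasi-ribbon shape: row r (1-indexed) starts at column qstart; the leftmost cell of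
 row r+1 lies directly below the rightmost cell of row r.\<close>

definition qstart :: "nat list \<Rightarrow> nat \<Rightarrow> nat" where
  "qstart \<sigma> r = 1 + (\<Sum>j<r - 1. \<sigma> ! j - 1)"

definition qr_cells :: "nat list \<Rightarrow> (nat \<times> nat) set" where
  "qr_cells \<sigma> = {(r, c). 1 \<le> r \<and> r \<le> length \<sigma> \<and> qstart \<sigma> r \<le> c \<and> c < qstart \<sigma> r + \<sigma> ! (r - 1)}"

definition is_qrt :: "tableau \<Rightarrow> bool" where
  "is_qrt T \<longleftrightarrow> (\<exists>\<sigma>. (\<forall>x\<in>set \<sigma>. 0 < x) \<and> dom T = qr_cells \<sigma>
      \<and> pos_entries T \<and> row_weak T \<and> col_strict T)"

definition young_cells :: "nat list \<Rightarrow> (nat \<times> nat) set" where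
  "young_cells lam = {(r, c). 1 \<le> r \<and> r \<le> length lam \<and> 1 \<le> c \<and> c \<le> lam ! (r - 1)}"

definition is_young :: "tableau \<Rightarrow> bool" where
  "is_young T \<longleftrightarrow> (\<exists>lam. (\<forall>x\<in>set lam. 0 < x) \<and> sorted_wrt (\<ge>) lam \<and> dom T = young_cells lam
      \<and> pos_entries T \<and> row_weak T \<and> col_strict T)"

definition colcells :: "(nat \<times> nat) set \<Rightarrow> (nat \<times> nat) list" where
  "colcells S = concat (map (\<lambda>c. map (\<lambda>r. (r, c)) (rev (sorted_list_of_set {r. (r, c) \<in> S})))
                          (sorted_list_of_set (snd ` S)))"

definition colreading :: "tableau \<Rightarrow> nat list" where
  "colreading T = map (\<lambda>p. the (T p)) (colcells (dom T))"

definition fill :: "(nat \<times> nat) set \<Rightarrow> nat list \<Rightarrow> tableau" where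
  "fill S w = map_of (zip (colcells S) w)"

definition qf :: "nat \<Rightarrow> nat list \<Rightarrow> nat list option" where
  "qf i u = (if i \<notin> set u \<or> (\<exists>j k. j < k \<and> k < length u \<and> u ! j = i + 1 \<and> u ! k = i) then None
             else Some (u[Max {j. j < length u \<and> u ! j = i} := i + 1]))"

text \<open>Kashiwara operator: signs are encoded as True = +, False = -, each tagged with
 its position in the word.\<close>
fun delpair :: "(bool \<times> nat) list \<Rightarrow> (bool \<times> nat) list option" where
  "delpair ((False, a) # (True, b) # xs) = Some xs"
| "delpair (x # xs) = map_option (Cons x) (delpair xs)"
| "delpair [] = None"

lemma delpair_length: "delpair xs = Some ys \<Longrightarrow> length ys < length xs"
  by (induction xs arbitrary: ys rule: delpair.induct) auto

function reduce_signs :: "(bool \<times> nat) list \<Rightarrow> (bool \<times> nat) list" where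
  "reduce_signs xs = (case delpair xs of None \<Rightarrow> xs | Some ys \<Rightarrow> reduce_signs ys)"
  by pat_completeness auto
termination
  by (relation "measure length") (auto dest: delpair_length)

definition kf :: "nat \<Rightarrow> nat list \<Rightarrow> nat list option" where
  "kf i u = (let ws = [(u ! j = i, j). j \<leftarrow> [0..<length u], u ! j = i \<or> u ! j = i + 1];
                 ps = [j. (s, j) \<leftarrow> reduce_signs ws, s]
             in if ps = [] then None else Some (u[last ps := i + 1]))"

definition qfT :: "nat \<Rightarrow> tableau \<Rightarrow> tableau option" where
  "qfT i T = map_option (fill (dom T)) (qf i (colreading T))"

definition kfT :: "nat \<Rightarrow> tableau \<Rightarrow> tableau option" where
  "kfT i T = map_option (fill (dom T)) (kf i (colreading T))"

definition leftjust :: "tableau \<Rightarrow> tableau" where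
  "leftjust T = (\<lambda>(r, c). if 1 \<le> c \<and> (\<exists>c0. (r, c0) \<in> dom T)
                           then T (r, c + Min {c0. (r, c0) \<in> dom T} - 1) else None)"

definition upslide :: "tableau \<Rightarrow> tableau" where
  "upslide T = (\<lambda>(r, c). let rs = sorted_list_of_set {r0. (r0, c) \<in> dom T} in
                  if 1 \<le> r \<and> r \<le> length rs then T (rs ! (r - 1), c) else None)"

definition xi :: "tableau \<Rightarrow> tableau" where
  "xi T = upslide (leftjust T)"

end

theory Submission
  imports Defs
begin

definition cless :: "nat \<times> nat \<Rightarrow> nat \<times> nat \<Rightarrow> bool" where
  "cless p q \<longleftrightarrow> snd p < snd q \<or> (snd p = snd q \<and> fst q < fst p)"

definition blk :: "(nat \<times> nat) set \<Rightarrow> nat \<Rightarrow> (nat \<times> nat) list" where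
  "blk S c = map (\<lambda>r. (r, c)) (rev (sorted_list_of_set {r. (r, c) \<in> S}))"

lemma colcells_blk: "colcells S = concat (map (blk S) (sorted_list_of_set (snd ` S)))"
  unfolding colcells_def blk_def by simp

lemma blk_sorted: "sorted_wrt cless (blk S c)"
proof -
  have "sorted_wrt (<) (sorted_list_of_set {r. (r, c) \<in> S})"
    by (rule strict_sorted_list_of_set)
  then have "sorted_wrt (>) (rev (sorted_list_of_set {r. (r, c) \<in> S}))"
    by (simp add: sorted_wrt_rev)
  then show ?thesis unfolding blk_def
    by (simp add: sorted_wrt_map cless_def sorted_wrt_mono_rel[of _ "(>)"])
qed

lemma blk_snd: "x \<in> set (blk S c) \<Longrightarrow> snd x = c"
  unfolding blk_def by auto

lemma concat_blk_sorted:
  "sorted_wrt (<) cs \<Longrightarrow> sorted_wrt cless (concat (map (blk S) cs))"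
proof (induction cs)
  case Nil
  then show ?case by simp
next
  case (Cons c cs)
  have "\<forall>x\<in>set (blk S c). \<forall>y\<in>set (concat (map (blk S) cs)). cless x y"
    using Cons.prems by (auto simp: cless_def dest!: blk_snd)
  then show ?case using Cons by (simp add: sorted_wrt_append blk_sorted)
qed

lemma colcells_sorted: "sorted_wrt cless (colcells S)"
  unfolding colcells_blk by (rule concat_blk_sorted) (rule strict_sorted_list_of_set)

lemma sorted_wrt_irrefl_distinct:
  assumes "sorted_wrt R xs" "\<And>x. \<not> R x x"
  shows "distinct xs"
  using assms by (induction xs) auto

lemma colcells_distinct: "distinct (colcells S)"
  by (rule sorted_wrt_irrefl_distinct[OF colcells_sorted]) (simp add: cless_def)

lemma colcells_set:
  assumes "finite S"
  shows "set (colcells S) = S"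
proof -
  have fin: "finite {r. (r, c) \<in> S}" for c
    by (rule finite_subset[of _ "fst ` S"]) (auto simp: assms intro: rev_image_eqI)
  show ?thesis
    unfolding colcells_blk blk_def using assms fin by (auto intro: rev_image_eqI)
qed

lemma colcells_order:
  assumes "finite S" "cless p q" "j < length (colcells S)" "k < length (colcells S)"
    "colcells S ! j = p" "colcells S ! k = q"
  shows "j < k"
proof (rule ccontr)
  assume "\<not> j < k"
  moreover have "j \<noteq> k" using assms by (auto simp: cless_def)
  ultimately have "k < j" by simp
  then have "cless q p" using colcells_sorted assms by (metis sorted_wrt_nth_less)
  then show False using assms(2) by (auto simp: cless_def)
qed


lemma length_colreading: "length (colreading T) = length (colcells (dom T))"
  by (simp add: colreading_def)

lemma colreading_nth:
  "finite (dom T) \<Longrightarrow> j < length (colcells (dom T)) \<Longrightarrow> T (colcells (dom T) ! j) = Some (colreading T ! j)"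
proof -
  assume j: "j < length (colcells (dom T))" and True: "finite (dom T)"
  then have "colcells (dom T) ! j \<in> dom T" using j colcells_set by (metis nth_mem)
  then show ?thesis using j by (auto simp: colreading_def)
qed

lemma set_colreading:
  assumes "finite (dom T)"
  shows "a \<in> set (colreading T) \<longleftrightarrow> (\<exists>p. T p = Some a)"
proof
  assume "a \<in> set (colreading T)"
  then obtain j where "j < length (colreading T)" "colreading T ! j = a" by (metis in_set_conv_nth)
  then show "\<exists>p. T p = Some a" using colreading_nth length_colreading assms by metis
next
  assume "\<exists>p. T p = Some a"
  then obtain p where p: "T p = Some a" by auto
  then have "p \<in> set (colcells (dom T))" using colcells_set[OF assms] by auto
  then obtain j where j: "j < length (colcells (dom T))" "colcells (dom T) ! j = p"
    by (metis in_set_conv_nth)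
  then have "colreading T ! j = a" using colreading_nth p assms by (metis option.inject)
  then show "a \<in> set (colreading T)" using j length_colreading by (metis nth_mem)
qed

lemma fill_upd:
  assumes fin: "finite (dom T)" and j: "j < length (colreading T)"
  shows "fill (dom T) ((colreading T)[j := v]) = T(colcells (dom T) ! j := Some v)"
proof
  fix x
  let ?cs = "colcells (dom T)"
  let ?w = "(colreading T)[j := v]"
  have len: "length ?cs = length ?w" by (simp add: length_colreading)
  show "fill (dom T) ?w x = (T(?cs ! j := Some v)) x"
  proof (cases "x \<in> set ?cs")
    case True
    then obtain k where k: "k < length ?cs" "?cs ! k = x" by (metis in_set_conv_nth)
    have "fill (dom T) ?w x = Some (?w ! k)"
      unfolding fill_def using map_of_zip_nth[OF len colcells_distinct] k len by metis
    moreover have "j < length ?cs" using j by (simp add: length_colreading)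
    moreover have "?cs ! j = ?cs ! k \<longleftrightarrow> j = k"
      using nth_eq_iff_index_eq[OF colcells_distinct] k \<open>j < length ?cs\<close> by metis
    ultimately show ?thesis using k colreading_nth[of T k] fin len by auto
  next
    case False
    then have "x \<notin> dom T" using colcells_set[OF fin] by simp
    moreover have "fill (dom T) ?w x = None"
      unfolding fill_def using False len by (auto simp: map_of_eq_None_iff dest: set_zip_leftD)
    moreover have "?cs ! j \<noteq> x" using False j by (metis length_colreading nth_mem)
    ultimately show ?thesis by (simp add: domIff)
  qed
qed


section \<open>Kashiwara operator without inversions\<close>

lemma delpair_None: "sorted_wrt (\<lambda>a b. fst b \<longrightarrow> fst a) xs \<Longrightarrow> delpair xs = None"
  by (induction xs rule: delpair.induct) auto

lemma reduce_signs_id: "delpair xs = None \<Longrightarrow> reduce_signs xs = xs"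
  by simp

lemma sorted_le_last: "sorted xs \<Longrightarrow> y \<in> set xs \<Longrightarrow> y \<le> last xs"
  by (induction xs) (auto dest: last_in_set)

lemma last_sorted_Max: "sorted xs \<Longrightarrow> xs \<noteq> [] \<Longrightarrow> last xs = Max (set xs)"
  by (rule sym, rule Max_eqI) (auto simp: sorted_le_last)

lemma concat_map_if: "concat (map (\<lambda>j. if P j then [f j] else []) xs) = map f (filter P xs)"
  by (induction xs) auto

lemma kf_noinv:
  assumes "i \<in> set u" "\<not> (\<exists>j k. j < k \<and> k < length u \<and> u ! j = i + 1 \<and> u ! k = i)"
  shows "kf i u = Some (u[Max {j. j < length u \<and> u ! j = i} := i + 1])"
proof -
  define ws where "ws = [(u ! j = i, j). j \<leftarrow> [0..<length u], u ! j = i \<or> u ! j = i + 1]"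
  have ws2: "ws = map (\<lambda>j. (u ! j = i, j)) (filter (\<lambda>j. u ! j = i \<or> u ! j = i + 1) [0..<length u])"
    unfolding ws_def by (simp add: concat_map_if)
  have "sorted_wrt (\<lambda>a b. fst b \<longrightarrow> fst a) ws"
    unfolding ws2 sorted_wrt_map
    apply (rule sorted_wrt_mono_rel[of _ "(<)"])
    subgoal for x y using assms(2) by auto
    by (rule sorted_wrt_filter) simp
  then have rs: "reduce_signs ws = ws" using delpair_None reduce_signs_id by blast
  have ps: "[j. (s, j) \<leftarrow> ws, s] = filter (\<lambda>j. u ! j = i) [0..<length u]"
    proof -
    have gen: "[j. (s, j) \<leftarrow> map (\<lambda>j. (Q j, j)) xs, s] = filter Q xs" for Q :: "nat \<Rightarrow> bool" and xs
      by (induction xs) auto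
    have "filter (\<lambda>j. u ! j = i) (filter (\<lambda>j. u ! j = i \<or> u ! j = i + 1) [0..<length u])
        = filter (\<lambda>j. u ! j = i) [0..<length u]"
      unfolding filter_filter by (rule filter_cong) auto
    then show ?thesis unfolding ws2 gen .
  qed
  obtain j0 where j0: "j0 < length u" "u ! j0 = i" using assms(1) by (metis in_set_conv_nth)
  then have "j0 \<in> set (filter (\<lambda>j. u ! j = i) [0..<length u])" by simp
  then have ne: "filter (\<lambda>j. u ! j = i) [0..<length u] \<noteq> []" by (metis empty_iff empty_set)
  have so: "sorted (filter (\<lambda>j. u ! j = i) [0..<length u])"
    by (rule sorted_wrt_filter) simp
  have la: "last (filter (\<lambda>j. u ! j = i) [0..<length u]) = Max {j. j < length u \<and> u ! j = i}"
  proof -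
    have "set (filter (\<lambda>j. u ! j = i) [0..<length u]) = {j. j < length u \<and> u ! j = i}" by auto
    then show ?thesis using last_sorted_Max[OF so ne] by simp
  qed
  have "kf i u = (if [j. (s, j) \<leftarrow> reduce_signs ws, s] = [] then None
                  else Some (u[last [j. (s, j) \<leftarrow> reduce_signs ws, s] := i + 1]))"
    unfolding kf_def ws_def Let_def by (simp del: reduce_signs.simps)
  then show ?thesis using ne la unfolding rs ps by (simp del: reduce_signs.simps)
qed


section \<open>Structure of xi\<close>

definition lmin :: "(nat \<times> nat) set \<Rightarrow> nat \<Rightarrow> nat" where
  "lmin D r = Min {c0. (r, c0) \<in> D}"
definition ljc :: "(nat \<times> nat) set \<Rightarrow> nat \<times> nat \<Rightarrow> bool" where
  "ljc D x \<longleftrightarrow> 1 \<le> snd x \<and> (\<exists>c0. (fst x, c0) \<in> D)"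
definition ljs :: "(nat \<times> nat) set \<Rightarrow> nat \<times> nat \<Rightarrow> nat \<times> nat" where
  "ljs D x = (fst x, snd x + lmin D (fst x) - 1)"
definition LD :: "(nat \<times> nat) set \<Rightarrow> (nat \<times> nat) set" where
  "LD D = {x. ljc D x \<and> ljs D x \<in> D}"
definition rws :: "(nat \<times> nat) set \<Rightarrow> nat \<Rightarrow> nat list" where
  "rws D c = sorted_list_of_set {r0. (r0, c) \<in> D}"
definition upc :: "(nat \<times> nat) set \<Rightarrow> nat \<times> nat \<Rightarrow> bool" where
  "upc D x \<longleftrightarrow> 1 \<le> fst x \<and> fst x \<le> length (rws D (snd x))"
definition ups :: "(nat \<times> nat) set \<Rightarrow> nat \<times> nat \<Rightarrow> nat \<times> nat" where
  "ups D x = (rws D (snd x) ! (fst x - 1), snd x)"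
definition xcond :: "(nat \<times> nat) set \<Rightarrow> nat \<times> nat \<Rightarrow> bool" where
  "xcond D x = upc (LD D) x"
definition xsrc :: "(nat \<times> nat) set \<Rightarrow> nat \<times> nat \<Rightarrow> nat \<times> nat" where
  "xsrc D x = ljs D (ups (LD D) x)"

lemma leftjust_eq: "leftjust T x = (if ljc (dom T) x then T (ljs (dom T) x) else None)"
  by (cases x) (auto simp: leftjust_def ljc_def ljs_def lmin_def)

lemma dom_leftjust: "dom (leftjust T) = LD (dom T)"
  by (auto simp: leftjust_eq LD_def split: if_splits)

lemma upslide_eq: "upslide T x = (if upc (dom T) x then T (ups (dom T) x) else None)"
  by (cases x) (simp add: upslide_def upc_def ups_def rws_def Let_def)

lemma finite_rows_LD:
  assumes "finite D" shows "finite {r0. (r0, c) \<in> LD D}"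
proof (rule finite_subset[of _ "fst ` D"])
  show "{r0. (r0, c) \<in> LD D} \<subseteq> fst ` D"
  proof
    fix r assume "r \<in> {r0. (r0, c) \<in> LD D}"
    then have "ljs D (r, c) \<in> D" by (simp add: LD_def)
    then show "r \<in> fst ` D" by (force simp: ljs_def)
  qed
qed (use assms in simp)

lemma ups_in:
  assumes "finite D" "upc (LD D) x" shows "ups (LD D) x \<in> LD D"
proof -
  let ?xs = "rws (LD D) (snd x)"
  have "fst x - 1 < length ?xs" using assms(2) unfolding upc_def by arith
  then have "?xs ! (fst x - 1) \<in> set ?xs" by simp
  then have "?xs ! (fst x - 1) \<in> {r0. (r0, snd x) \<in> LD D}"
    using finite_rows_LD[OF assms(1)] by (simp add: rws_def)
  then show ?thesis by (simp add: ups_def)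
qed

lemma xcond_src:
  assumes "finite D" "xcond D x"
  shows "xsrc D x \<in> D" "ljc D (ups (LD D) x)"
  using ups_in[OF assms(1)] assms(2) by (auto simp: xcond_def xsrc_def LD_def)

lemma xi_eq:
  assumes "finite (dom T)"
  shows "xi T x = (if xcond (dom T) x then T (xsrc (dom T) x) else None)"
  using xcond_src[OF assms] unfolding xi_def upslide_eq dom_leftjust leftjust_eq xcond_def xsrc_def
  by auto

lemma dom_xi:
  assumes "finite (dom T)"
  shows "dom (xi T) = {x. xcond (dom T) x}"
  using xcond_src[OF assms] by (auto simp: xi_eq[OF assms] dom_def split: if_splits)

lemma xi_upd:
  assumes "finite (dom T)" "p \<in> dom T"
  shows "xi (T(p \<mapsto> v)) x = (if xcond (dom T) x \<and> xsrc (dom T) x = p then Some v else xi T x)"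
proof -
  have d: "dom (T(p \<mapsto> v)) = dom T" using assms(2) by auto
  show ?thesis using xi_eq[OF assms(1)] xi_eq[of "T(p \<mapsto> v)"] assms(1) unfolding d by auto
qed

lemma xsrc_fst: "fst (xsrc D x) = rws (LD D) (snd x) ! (fst x - 1)"
  by (simp add: xsrc_def ljs_def ups_def)

lemma xsrc_snd: "snd (xsrc D x) = snd x + lmin D (fst (xsrc D x)) - 1"
  by (simp add: xsrc_def ljs_def ups_def)

lemma xcond_snd: "finite D \<Longrightarrow> xcond D x \<Longrightarrow> 1 \<le> snd x"
proof -
  assume "finite D" "xcond D x"
  then have "ljc D (ups (LD D) x)" by (rule xcond_src(2))
  then show ?thesis by (simp add: ljc_def ups_def)
qed

lemma xsrc_inj:
  assumes "finite D" "xcond D x" "xcond D y" "xsrc D x = xsrc D y"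
  shows "x = y"
proof -
  have f: "fst (xsrc D x) = fst (xsrc D y)" using assms(4) by simp
  have e: "snd x + lmin D (fst (xsrc D x)) - 1 = snd y + lmin D (fst (xsrc D x)) - 1"
    using assms(4) xsrc_snd[of D x] xsrc_snd[of D y] f by simp
  have "snd x = snd y"
    using e xcond_snd[OF assms(1,2)] xcond_snd[OF assms(1,3)] by arith
  let ?xs = "rws (LD D) (snd x)"
  have d: "distinct ?xs" by (simp add: rws_def)
  have l: "fst x - 1 < length ?xs" "fst y - 1 < length ?xs" "1 \<le> fst x" "1 \<le> fst y"
    using assms(2,3) \<open>snd x = snd y\<close> unfolding xcond_def upc_def by arith+
  have "?xs ! (fst x - 1) = ?xs ! (fst y - 1)"
    using f \<open>snd x = snd y\<close> by (simp add: xsrc_fst)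
  then have "fst x - 1 = fst y - 1" using nth_eq_iff_index_eq[OF d l(1) l(2)] by simp
  then have "fst x = fst y" using l(3,4) by arith
  then show ?thesis using \<open>snd x = snd y\<close> by (simp add: prod_eq_iff)
qed

lemma xsrc_surj:
  assumes "finite D" "p \<in> D"
  shows "\<exists>x. xcond D x \<and> xsrc D x = p"
proof -
  obtain r c where p: "p = (r, c)" by (cases p)
  have fin: "finite {c0. (r, c0) \<in> D}"
    by (rule finite_subset[of _ "snd ` D"]) (auto simp: assms(1) intro: rev_image_eqI)
  have m: "lmin D r \<le> c" unfolding lmin_def using assms(2) p fin by (auto intro: Min_le)
  define c' where "c' = c - lmin D r + 1"
  have ljs': "ljs D (r, c') = (r, c)" using m by (simp add: ljs_def c'_def)
  have "(r, c') \<in> LD D" using ljs' assms(2) p by (auto simp: LD_def ljc_def c'_def)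
  then have "r \<in> set (rws (LD D) c')" using finite_rows_LD[OF assms(1)] by (simp add: rws_def)
  then obtain k where k: "k < length (rws (LD D) c')" "rws (LD D) c' ! k = r"
    by (metis in_set_conv_nth)
  have "xcond D (Suc k, c')" using k by (simp add: xcond_def upc_def)
  moreover have "xsrc D (Suc k, c') = p" using k ljs' p by (simp add: xsrc_def ups_def)
  ultimately show ?thesis by blast
qed


section \<open>Quasi-ribbon facts\<close>

lemma qr_mem: "(r, c) \<in> qr_cells \<sigma> \<longleftrightarrow> 1 \<le> r \<and> r \<le> length \<sigma> \<and> qstart \<sigma> r \<le> c \<and> c < qstart \<sigma> r + \<sigma> ! (r - 1)"
  by (simp add: qr_cells_def)

lemma qstart_Suc:
  assumes "1 \<le> r" "r \<le> length \<sigma>" "\<forall>x\<in>set \<sigma>. 0 < x"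
  shows "qstart \<sigma> (Suc r) = qstart \<sigma> r + \<sigma> ! (r - 1) - 1"
proof -
  obtain r' where r: "r = Suc r'" using assms(1) by (cases r) auto
  have "0 < \<sigma> ! r'" using assms(2,3) r by auto
  then show ?thesis unfolding qstart_def r by simp
qed

lemma finite_qr: "finite (qr_cells \<sigma>)"
proof (rule finite_subset)
  show "qr_cells \<sigma> \<subseteq> {0..length \<sigma>} \<times> {0..(\<Sum>r\<le>length \<sigma>. qstart \<sigma> r + \<sigma> ! (r - 1))}"
  proof
    fix x assume x: "x \<in> qr_cells \<sigma>"
    obtain r c where xrc: "x = (r, c)" by (cases x)
    have "r \<le> length \<sigma>" "c < qstart \<sigma> r + \<sigma> ! (r - 1)" using x xrc by (auto simp: qr_mem)
    moreover have "qstart \<sigma> r + \<sigma> ! (r - 1) \<le> (\<Sum>r\<le>length \<sigma>. qstart \<sigma> r + \<sigma> ! (r - 1))"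
      using \<open>r \<le> length \<sigma>\<close> by (intro member_le_sum) auto
    ultimately show "x \<in> {0..length \<sigma>} \<times> {0..(\<Sum>r\<le>length \<sigma>. qstart \<sigma> r + \<sigma> ! (r - 1))}"
      using xrc by auto
  qed
qed simp

locale qrt =
  fixes \<sigma> :: "nat list" and Q :: tableau
  assumes pos: "\<forall>x\<in>set \<sigma>. 0 < x" and dQ: "dom Q = qr_cells \<sigma>"
    and rw: "row_weak Q" and cs: "col_strict Q"
begin

lemma finQ: "finite (dom Q)" using dQ finite_qr by simp

lemma memQ: "(r, c) \<in> dom Q \<longleftrightarrow> 1 \<le> r \<and> r \<le> length \<sigma> \<and> qstart \<sigma> r \<le> c \<and> c < qstart \<sigma> r + \<sigma> ! (r - 1)"
  using dQ qr_mem by simp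

lemma row_mono:
  assumes "Q (r, c1) = Some a" "Q (r, c2) = Some b" "c1 \<le> c2"
  shows "a \<le> b"
  using assms(2,3)
proof (induction c2 arbitrary: b)
  case 0
  then show ?case using assms(1) by simp
next
  case (Suc c)
  show ?case
  proof (cases "c1 = Suc c")
    case True
    then show ?thesis using assms(1) Suc.prems by simp
  next
    case False
    then have c1c: "c1 \<le> c" using Suc.prems by simp
    have "(r, c1) \<in> dom Q" "(r, Suc c) \<in> dom Q" using assms(1) Suc.prems by auto
    then have "(r, c) \<in> dom Q" using c1c unfolding memQ by auto
    then obtain m where m: "Q (r, c) = Some m" by auto
    have "a \<le> m" using Suc.IH[OF m c1c] .
    moreover have "m \<le> b" using rw m Suc.prems(1) unfolding row_weak_def by blast
    ultimately show ?thesis by simp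
  qed
qed

lemma last_first:
  assumes "1 \<le> r" "Suc r \<le> length \<sigma>"
  shows "(r, qstart \<sigma> (Suc r)) \<in> dom Q" "(Suc r, qstart \<sigma> (Suc r)) \<in> dom Q"
proof -
  have q: "qstart \<sigma> (Suc r) = qstart \<sigma> r + \<sigma> ! (r - 1) - 1" using qstart_Suc assms pos by simp
  have "0 < \<sigma> ! (r - 1)" "0 < \<sigma> ! r" using assms pos by auto
  then show "(r, qstart \<sigma> (Suc r)) \<in> dom Q" "(Suc r, qstart \<sigma> (Suc r)) \<in> dom Q"
    unfolding memQ q using assms by auto
qed

lemma adj_rows:
  assumes "Q (r, c1) = Some a" "Q (Suc r, c2) = Some b"
  shows "a < b"
proof -
  have m1: "(r, c1) \<in> dom Q" and m2: "(Suc r, c2) \<in> dom Q" using assms by auto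
  then have r: "1 \<le> r" "Suc r \<le> length \<sigma>" unfolding memQ by auto
  let ?e = "qstart \<sigma> (Suc r)"
  have q: "?e = qstart \<sigma> r + \<sigma> ! (r - 1) - 1" using qstart_Suc r pos by simp
  obtain v w where v: "Q (r, ?e) = Some v" and w: "Q (Suc r, ?e) = Some w"
    using last_first[OF r] by auto
  have "c1 \<le> ?e" using m1 q unfolding memQ by auto
  then have "a \<le> v" using row_mono assms(1) v by blast
  moreover have "v < w" using cs v w unfolding col_strict_def by blast
  moreover have "?e \<le> c2" using m2 unfolding memQ by auto
  then have "w \<le> b" using row_mono assms(2) w by blast
  ultimately show ?thesis by simp
qed

lemma rows_lt:
  assumes "Q (r, c1) = Some a" "Q (r', c2) = Some b" "r < r'"
  shows "a < b"
  using assms(2,3)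
proof (induction r' arbitrary: c2 b)
  case 0
  then show ?case by simp
next
  case (Suc r'')
  show ?case
  proof (cases "r = r''")
    case True
    then show ?thesis using adj_rows assms(1) Suc.prems by blast
  next
    case False
    then have rr: "r < r''" using Suc.prems by simp
    have "(Suc r'', c2) \<in> dom Q" using Suc.prems by auto
    then have "1 \<le> r''" "r'' \<le> length \<sigma>" using rr unfolding memQ by auto
    then have "(r'', qstart \<sigma> r'') \<in> dom Q" using pos unfolding memQ by auto
    then obtain m where m: "Q (r'', qstart \<sigma> r'') = Some m" by auto
    have "a < m" using Suc.IH[OF m rr] .
    moreover have "m < b" using adj_rows m Suc.prems(1) by blast
    ultimately show ?thesis by simp
  qed
qed

lemma same_row:
  assumes "Q X = Some a" "Q Y = Some a"
  shows "fst X = fst Y"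
proof -
  obtain r c r' c' where X: "X = (r, c)" and Y: "Y = (r', c')" by (cases X, cases Y)
  show ?thesis using rows_lt[of r c a r' c' a] rows_lt[of r' c' a r c a] assms X Y
    by (cases "r < r'"; cases "r' < r") auto
qed

lemma ribbon:
  assumes "Q (r, c1) = Some i" "Q (r', c2) = Some (Suc i)" "r < r'"
  shows "\<exists>e. Q (r, e) = Some i \<and> Q (Suc r, e) = Some (Suc i)"
proof -
  have m1: "(r, c1) \<in> dom Q" and m2: "(r', c2) \<in> dom Q" using assms by auto
  then have r: "1 \<le> r" "Suc r \<le> length \<sigma>" using assms(3) unfolding memQ by auto
  let ?e = "qstart \<sigma> (Suc r)"
  have q: "?e = qstart \<sigma> r + \<sigma> ! (r - 1) - 1" using qstart_Suc r pos by simp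
  obtain v w where v: "Q (r, ?e) = Some v" and w: "Q (Suc r, ?e) = Some w"
    using last_first[OF r] by auto
  have "c1 \<le> ?e" using m1 q unfolding memQ by auto
  then have "i \<le> v" using row_mono assms(1) v by blast
  moreover have "v < Suc i" using rows_lt[OF v assms(2,3)] .
  ultimately have vi: "v = i" by simp
  have "v < w" using cs v w unfolding col_strict_def by blast
  moreover have "w \<le> Suc i"
  proof (cases "Suc r = r'")
    case True
    have "?e \<le> c2" using m2 True unfolding memQ by auto
    then show ?thesis using row_mono w assms(2) True by blast
  next
    case False
    then have "Suc r < r'" using assms(3) by simp
    then show ?thesis using rows_lt[OF w assms(2)] by simp
  qed
  ultimately have "w = Suc i" using vi by simp
  then show ?thesis using v w vi by blast
qed


lemma colcells_idx:
  assumes "finite S" "z \<in> S"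
  shows "\<exists>k < length (colcells S). colcells S ! k = z"
  using assms colcells_set by (metis in_set_conv_nth)

lemma cless_lt:
  assumes "j < k" "k < length (colcells S)"
  shows "cless (colcells S ! j) (colcells S ! k)"
  using colcells_sorted assms sorted_wrt_nth_less by blast


abbreviation "D2 \<equiv> {x. xcond (dom Q) x}"

lemma dom_xiQ: "dom (xi Q) = D2" using dom_xi[OF finQ] .

lemma xiQ_val: "xcond (dom Q) x \<Longrightarrow> xi Q x = Q (xsrc (dom Q) x)"
  using xi_eq[OF finQ] by simp

lemma fin2: "finite (dom (xi Q))"
proof -
  have "xsrc (dom Q) ` D2 \<subseteq> dom Q" using xcond_src(1)[OF finQ] by blast
  then have "finite (xsrc (dom Q) ` D2)" using finQ finite_subset by blast
  moreover have "inj_on (xsrc (dom Q)) D2" using xsrc_inj[OF finQ] by (auto simp: inj_on_def)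
  ultimately show ?thesis using dom_xiQ finite_imageD by metis
qed

lemma snd_shift:
  assumes "xcond (dom Q) x" "xcond (dom Q) y" "fst (xsrc (dom Q) x) = fst (xsrc (dom Q) y)"
  shows "snd x < snd y \<longleftrightarrow> snd (xsrc (dom Q) x) < snd (xsrc (dom Q) y)"
    "snd x = snd y \<longleftrightarrow> snd (xsrc (dom Q) x) = snd (xsrc (dom Q) y)"
  using xsrc_snd[of "dom Q" x] xsrc_snd[of "dom Q" y] assms(3)
    xcond_snd[OF finQ assms(1)] xcond_snd[OF finQ assms(2)] by arith+

lemma crystal:
  assumes qf: "qf i (colreading Q) = Some u'"
  shows "kfT i (xi Q) = Some (xi (fill (dom Q) u'))"
proof -
  define u where "u = colreading Q"
  define cs where "cs = colcells (dom Q)"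
  define T2 where "T2 = xi Q"
  define u2 where "u2 = colreading T2"
  define cs2 where "cs2 = colcells (dom T2)"
  have iu: "i \<in> set u" and noinv: "\<not> (\<exists>j k. j < k \<and> k < length u \<and> u ! j = i + 1 \<and> u ! k = i)"
    and u': "u' = u[Max {j. j < length u \<and> u ! j = i} := i + 1]"
    using qf unfolding u_def qf_def by (auto split: if_splits)
  define jm where "jm = Max {j. j < length u \<and> u ! j = i}"
  have fs: "finite {j. j < length u \<and> u ! j = i}" by simp
  have ne: "{j. j < length u \<and> u ! j = i} \<noteq> {}" using iu by (auto simp: in_set_conv_nth)
  have jm: "jm < length u" "u ! jm = i" using Max_in[OF fs ne] unfolding jm_def by auto
  have jmax: "j \<le> jm" if "j < length u" "u ! j = i" for j
    using Max_ge[OF fs] that unfolding jm_def by auto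
  have lu: "length u = length cs" unfolding u_def cs_def by (simp add: length_colreading)
  have lu2: "length u2 = length cs2" unfolding u2_def cs2_def by (simp add: length_colreading)
  have valQ: "Q (cs ! j) = Some (u ! j)" if "j < length cs" for j
    using colreading_nth[OF finQ] that unfolding u_def cs_def by simp
  have valT2: "T2 (cs2 ! j) = Some (u2 ! j)" if "j < length cs2" for j
    using colreading_nth[OF fin2] that unfolding u2_def cs2_def T2_def by simp
  have d2: "dom T2 = D2" unfolding T2_def by (rule dom_xiQ)
  have fin2': "finite (dom T2)" unfolding T2_def by (rule fin2)
  define p where "p = cs ! jm"
  have Qp: "Q p = Some i" using valQ jm lu unfolding p_def by simp
  have pD: "p \<in> dom Q" using Qp by auto
  have Q': "fill (dom Q) u' = Q(p \<mapsto> i + 1)"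
    using fill_upd[OF finQ, of jm "i+1"] jm u' unfolding u_def cs_def p_def jm_def by simp
  have T2val: "T2 x = Q (xsrc (dom Q) x)" if "x \<in> dom T2" for x
    using that d2 xiQ_val unfolding T2_def by simp
  have in_cs2: "cs2 ! j \<in> dom T2" if "j < length cs2" for j
    using that colcells_set[OF fin2'] unfolding cs2_def by (metis nth_mem)
  have noinv2: "\<not> (\<exists>j k. j < k \<and> k < length u2 \<and> u2 ! j = i + 1 \<and> u2 ! k = i)"
  proof
    assume "\<exists>j k. j < k \<and> k < length u2 \<and> u2 ! j = i + 1 \<and> u2 ! k = i"
    then obtain j k where jk: "j < k" "k < length u2" "u2 ! j = i + 1" "u2 ! k = i" by blast
    define x where "x = cs2 ! j"
    define y where "y = cs2 ! k"
    have xD: "x \<in> dom T2" "y \<in> dom T2" using in_cs2 jk lu2 unfolding x_def y_def by auto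
    then have xc: "xcond (dom Q) x" "xcond (dom Q) y" using d2 by auto
    have "T2 x = Some (i + 1)" "T2 y = Some i" using valT2 jk lu2 unfolding x_def y_def by auto
    then have vx: "Q (xsrc (dom Q) x) = Some (i + 1)" and vy: "Q (xsrc (dom Q) y) = Some i"
      using T2val xD by auto
    have cl: "cless x y" using cless_lt jk lu2 unfolding x_def y_def cs2_def by simp
    obtain r1 c1 where X: "xsrc (dom Q) x = (r1, c1)" by (cases "xsrc (dom Q) x")
    obtain r2 c2 where Y: "xsrc (dom Q) y = (r2, c2)" by (cases "xsrc (dom Q) y")
    consider "r1 < r2" | "r2 < r1" | "r1 = r2" by arith
    then show False
    proof cases
      case 1
      then show False using rows_lt[of r1 c1 "i+1" r2 c2 i] vx vy X Y by simp
    next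
      case 2
      then obtain e where e: "Q (r2, e) = Some i" "Q (Suc r2, e) = Some (Suc i)"
        using ribbon[of r2 c2 i r1 c1] vx vy X Y by auto
      obtain kz where kz: "kz < length cs" "cs ! kz = (Suc r2, e)"
        using colcells_idx[OF finQ, of "(Suc r2, e)"] e unfolding cs_def by auto
      obtain kl where kl: "kl < length cs" "cs ! kl = (r2, e)"
        using colcells_idx[OF finQ, of "(r2, e)"] e unfolding cs_def by auto
      have "kz < kl" using colcells_order[OF finQ, of "(Suc r2, e)" "(r2, e)" kz kl] kz kl
        unfolding cs_def by (simp add: cless_def)
      moreover have "u ! kz = i + 1" using valQ[OF kz(1)] kz(2) e(2) by simp
      moreover have "u ! kl = i" using valQ[OF kl(1)] kl(2) e(1) by simp
      ultimately show False using noinv kl lu by auto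
    next
      case 3
      have cl': "snd x < snd y \<or> snd x = snd y" using cl by (auto simp: cless_def)
      then show False
      proof
        assume "snd x < snd y"
        then have "c1 < c2" using snd_shift(1)[OF xc] X Y 3 by simp
        then have "i + 1 \<le> i" using row_mono[of r1 c1 "i+1" c2 i] vx vy X Y 3 by simp
        then show False by simp
      next
        assume "snd x = snd y"
        then have "c1 = c2" using snd_shift(2)[OF xc] X Y 3 by simp
        then show False using vx vy X Y 3 by simp
      qed
    qed
  qed
  obtain xp where xp: "xcond (dom Q) xp" "xsrc (dom Q) xp = p" using xsrc_surj[OF finQ pD] by blast
  have xpD: "xp \<in> dom T2" using xp d2 by simp
  have T2xp: "T2 xp = Some i" using T2val[OF xpD] xp Qp by simp
  have iu2: "i \<in> set u2" using set_colreading[OF fin2'] T2xp unfolding u2_def by blast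
  define jm2 where "jm2 = Max {j. j < length u2 \<and> u2 ! j = i}"
  have fs2: "finite {j. j < length u2 \<and> u2 ! j = i}" by simp
  have ne2: "{j. j < length u2 \<and> u2 ! j = i} \<noteq> {}" using iu2 by (auto simp: in_set_conv_nth)
  have jm2: "jm2 < length u2" "u2 ! jm2 = i" using Max_in[OF fs2 ne2] unfolding jm2_def by auto
  have jmax2: "j \<le> jm2" if "j < length u2" "u2 ! j = i" for j
    using Max_ge[OF fs2] that unfolding jm2_def by auto
  define y where "y = cs2 ! jm2"
  have yD: "y \<in> dom T2" using in_cs2 jm2 lu2 unfolding y_def by auto
  then have yc: "xcond (dom Q) y" using d2 by auto
  have "T2 y = Some i" using valT2 jm2 lu2 unfolding y_def by auto
  then have vy: "Q (xsrc (dom Q) y) = Some i" using T2val[OF yD] by simp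
  have key2: "xsrc (dom Q) y = p"
  proof -
    have fr: "fst (xsrc (dom Q) y) = fst p" using same_row[OF vy Qp] .
    consider "snd (xsrc (dom Q) y) < snd p" | "snd p < snd (xsrc (dom Q) y)"
      | "snd (xsrc (dom Q) y) = snd p" by arith
    then show ?thesis
    proof cases
      case 1
      then have "snd y < snd xp" using snd_shift(1)[OF yc xp(1)] fr xp(2) by simp
      then have cl: "cless y xp" by (simp add: cless_def)
      obtain kp where kp: "kp < length cs2" "cs2 ! kp = xp"
        using colcells_idx[OF fin2' xpD] unfolding cs2_def by auto
      have "jm2 < kp" using colcells_order[OF fin2' cl, of jm2 kp] kp jm2 lu2
        unfolding cs2_def y_def by simp
      moreover have "u2 ! kp = i" using valT2[OF kp(1)] kp T2xp by simp
      ultimately show ?thesis using jmax2 kp lu2 by fastforce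
    next
      case 2
      then have cl: "cless p (xsrc (dom Q) y)" by (simp add: cless_def)
      obtain ky where ky: "ky < length cs" "cs ! ky = xsrc (dom Q) y"
        using colcells_idx[OF finQ] vy unfolding cs_def by blast
      have "jm < ky" using colcells_order[OF finQ cl, of jm ky] ky jm lu
        unfolding cs_def p_def by simp
      moreover have "u ! ky = i" using valQ[OF ky(1)] ky vy by simp
      ultimately show ?thesis using jmax ky lu by fastforce
    next
      case 3
      then show ?thesis using fr by (simp add: prod_eq_iff)
    qed
  qed
  have kf2: "kf i u2 = Some (u2[jm2 := i + 1])"
    using kf_noinv[OF iu2 noinv2] unfolding jm2_def by simp
  have "kfT i T2 = Some (T2(y \<mapsto> i + 1))"
    unfolding kfT_def u2_def[symmetric] kf2 using fill_upd[OF fin2', of jm2 "i+1"] jm2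
    unfolding u2_def y_def cs2_def by simp
  moreover have "xi (Q(p \<mapsto> i + 1)) = T2(y \<mapsto> i + 1)"
  proof
    fix x
    show "xi (Q(p \<mapsto> i + 1)) x = (T2(y \<mapsto> i + 1)) x"
    proof (cases "x = y")
      case True
      then show ?thesis using xi_upd[OF finQ pD] yc key2 by simp
    next
      case False
      have "\<not> (xcond (dom Q) x \<and> xsrc (dom Q) x = p)"
        using xsrc_inj[OF finQ _ yc] key2 False by metis
      then show ?thesis using xi_upd[OF finQ pD, of "i + 1" x] False unfolding T2_def by auto
    qed
  qed
  ultimately show ?thesis using Q' unfolding T2_def by simp
qed


end

section \<open>Young shape\<close>

lemma sorted_list_subset_nth:
  fixes A B :: "nat set"
  assumes fA: "finite A" and BA: "B \<subseteq> A" and k: "k < card B"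
  shows "sorted_list_of_set A ! k \<le> sorted_list_of_set B ! k"
proof (rule ccontr)
  have fB: "finite B" using fA BA finite_subset by blast
  define xs where "xs = sorted_list_of_set A"
  define ys where "ys = sorted_list_of_set B"
  have sx: "sorted xs" "distinct xs" "set xs = A" using fA unfolding xs_def by auto
  have sy: "sorted ys" "distinct ys" "set ys = B" "length ys = card B" using fB unfolding ys_def by auto
  assume "\<not> xs ! k \<le> ys ! k"
  then have lt: "ys ! k < xs ! k" by simp
  have "set (take (Suc k) ys) \<subseteq> set (take k xs)"
  proof
    fix s assume "s \<in> set (take (Suc k) ys)"
    then obtain j where j: "j < Suc k" "j < length ys" "ys ! j = s"
      by (auto simp: in_set_conv_nth)
    have "s \<le> ys ! k" using sorted_nth_mono[OF sy(1), of j k] j k sy(4) by simp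
    have "s \<in> A" using j sy(3) BA by (metis nth_mem subsetD)
    then obtain j' where j': "j' < length xs" "xs ! j' = s" using sx(3) by (metis in_set_conv_nth)
    have "j' < k"
    proof (rule ccontr)
      assume "\<not> j' < k"
      then have "xs ! k \<le> xs ! j'" using sorted_nth_mono[OF sx(1), of k j'] j' by simp
      then show False using lt j' \<open>s \<le> ys ! k\<close> by simp
    qed
    then show "s \<in> set (take k xs)" using j' by (auto simp: in_set_conv_nth intro: exI[of _ j'])
  qed
  then have "card (set (take (Suc k) ys)) \<le> card (set (take k xs))" by (rule card_mono[rotated]) simp
  moreover have "card (set (take (Suc k) ys)) = Suc k"
    using sy k by (simp add: distinct_card)
  moreover have "card (set (take k xs)) \<le> k" using card_length[of "take k xs"] by simp
  ultimately show False by simp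
qed

lemma downclosed_interval:
  fixes A :: "nat set"
  assumes "finite A" "\<forall>c\<in>A. 1 \<le> c" "\<forall>c\<in>A. \<forall>c'. 1 \<le> c' \<longrightarrow> c' \<le> c \<longrightarrow> c' \<in> A"
  shows "A = {1..card A}"
proof (cases "A = {}")
  case True
  then show ?thesis by simp
next
  case False
  define m where "m = Max A"
  have "m \<in> A" using Max_in assms(1) False unfolding m_def by blast
  have "A = {1..m}"
  proof
    show "A \<subseteq> {1..m}" using assms(1,2) Max_ge unfolding m_def by auto
    show "{1..m} \<subseteq> A" using assms(3) \<open>m \<in> A\<close> by auto
  qed
  then show ?thesis by simp
qed

context qrt
begin

lemma lmin_eq:
  assumes "1 \<le> r" "r \<le> length \<sigma>"
  shows "lmin (dom Q) r = qstart \<sigma> r"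
proof -
  have fin: "finite {c0. (r, c0) \<in> dom Q}"
    by (rule finite_subset[of _ "snd ` dom Q"]) (auto simp: finQ intro: rev_image_eqI)
  have "0 < \<sigma> ! (r - 1)" using pos assms by auto
  then have "(r, qstart \<sigma> r) \<in> dom Q" using assms by (simp add: memQ)
  then show ?thesis unfolding lmin_def
    by (intro Min_eqI[OF fin]) (auto simp: memQ)
qed

lemma LD_eq: "x \<in> LD (dom Q) \<longleftrightarrow> 1 \<le> fst x \<and> fst x \<le> length \<sigma> \<and> 1 \<le> snd x \<and> snd x \<le> \<sigma> ! (fst x - 1)"
proof -
  obtain r c where x: "x = (r, c)" by (cases x)
  have ex: "(\<exists>c0. (r, c0) \<in> dom Q) \<longleftrightarrow> 1 \<le> r \<and> r \<le> length \<sigma>"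
  proof
    assume "\<exists>c0. (r, c0) \<in> dom Q" then show "1 \<le> r \<and> r \<le> length \<sigma>" by (auto simp: memQ)
  next
    assume r: "1 \<le> r \<and> r \<le> length \<sigma>"
    then have "0 < \<sigma> ! (r - 1)" using pos by auto
    then have "(r, qstart \<sigma> r) \<in> dom Q" using r by (simp add: memQ)
    then show "\<exists>c0. (r, c0) \<in> dom Q" by blast
  qed
  show ?thesis
  proof (cases "1 \<le> r \<and> r \<le> length \<sigma>")
    case True
    then show ?thesis unfolding x LD_def ljc_def ljs_def using ex lmin_eq[of r] by (auto simp: memQ)
  next
    case False
    then show ?thesis unfolding x LD_def ljc_def using ex by auto
  qed
qed

definition H :: "nat \<Rightarrow> nat" where
  "H c = length (rws (LD (dom Q)) c)"

lemma rowset: "{r0. (r0, c) \<in> LD (dom Q)} = {r. 1 \<le> r \<and> r \<le> length \<sigma> \<and> 1 \<le> c \<and> c \<le> \<sigma> ! (r - 1)}"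
  using LD_eq by auto

lemma H_eq: "H c = card {r. 1 \<le> r \<and> r \<le> length \<sigma> \<and> 1 \<le> c \<and> c \<le> \<sigma> ! (r - 1)}"
  unfolding H_def rws_def rowset by simp

lemma H_le: "H c \<le> length \<sigma>"
proof -
  have "{r. 1 \<le> r \<and> r \<le> length \<sigma> \<and> 1 \<le> c \<and> c \<le> \<sigma> ! (r - 1)} \<subseteq> {1..length \<sigma>}" by auto
  then show ?thesis unfolding H_eq using card_mono[of "{1..length \<sigma>}"] by fastforce
qed

lemma H_1: "H 1 = length \<sigma>"
proof -
  have "{r. 1 \<le> r \<and> r \<le> length \<sigma> \<and> 1 \<le> (1::nat) \<and> 1 \<le> \<sigma> ! (r - 1)} = {1..length \<sigma>}"
    using pos by (auto simp: Suc_le_eq)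
  then show ?thesis unfolding H_eq by simp
qed

lemma H_mono: "1 \<le> c \<Longrightarrow> c \<le> c' \<Longrightarrow> H c' \<le> H c"
  unfolding H_eq by (rule card_mono) auto

lemma H_0: "c = 0 \<Longrightarrow> H c = 0"
  unfolding H_eq by simp

lemma H_big: "sum_list \<sigma> < c \<Longrightarrow> H c = 0"
proof -
  assume c: "sum_list \<sigma> < c"
  have "{r. 1 \<le> r \<and> r \<le> length \<sigma> \<and> 1 \<le> c \<and> c \<le> \<sigma> ! (r - 1)} = {}"
  proof (rule ccontr)
    assume "\<not> ?thesis"
    then obtain r where "1 \<le> r" "r \<le> length \<sigma>" "c \<le> \<sigma> ! (r - 1)" by auto
    moreover have "\<sigma> ! (r - 1) \<le> sum_list \<sigma>" using calculation by (intro elem_le_sum_list) auto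
    ultimately show False using c by simp
  qed
  then show ?thesis unfolding H_eq by simp
qed

lemma dom_xi_H: "x \<in> dom (xi Q) \<longleftrightarrow> 1 \<le> fst x \<and> fst x \<le> H (snd x)"
  using dom_xiQ by (simp add: xcond_def upc_def H_def)

definition A :: "nat \<Rightarrow> nat set" where
  "A k = {c. 1 \<le> c \<and> k \<le> H c}"

lemma A_fin: "1 \<le> k \<Longrightarrow> finite (A k)"
proof -
  assume k: "1 \<le> k"
  have "A k \<subseteq> {0..sum_list \<sigma>}"
  proof
    fix c assume "c \<in> A k"
    then have "1 \<le> H c" using k by (simp add: A_def)
    then show "c \<in> {0..sum_list \<sigma>}" using H_big by (cases "sum_list \<sigma> < c") auto
  qed
  then show ?thesis using finite_subset by blast
qed

lemma A_int:
  assumes "1 \<le> k" shows "A k = {1..card (A k)}"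
proof (rule downclosed_interval[OF A_fin[OF assms]])
  show "\<forall>c\<in>A k. 1 \<le> c" by (simp add: A_def)
  show "\<forall>c\<in>A k. \<forall>c'. 1 \<le> c' \<longrightarrow> c' \<le> c \<longrightarrow> c' \<in> A k"
    using H_mono le_trans unfolding A_def by blast
qed

definition lam :: "nat list" where
  "lam = map (\<lambda>k. card (A k)) [1..<Suc (length \<sigma>)]"

lemma young_xi:
  assumes pe: "pos_entries Q"
  shows "is_young (xi Q)"
  unfolding is_young_def
proof (intro exI[of _ lam] conjI)
  show "\<forall>x\<in>set lam. 0 < x"
  proof
    fix x assume "x \<in> set lam"
    then obtain k where k: "1 \<le> k" "k \<le> length \<sigma>" "x = card (A k)" by (auto simp: lam_def)
    have "1 \<in> A k" using k H_1 by (simp add: A_def)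
    then show "0 < x" using k A_fin card_gt_0_iff by blast
  qed
  show "sorted_wrt (\<ge>) lam"
    unfolding lam_def sorted_wrt_map
  proof (rule sorted_wrt_mono_rel[of _ "(<)"])
    fix x y assume xy: "x \<in> set [1..<Suc (length \<sigma>)]" "y \<in> set [1..<Suc (length \<sigma>)]" "x < y"
    have "A y \<subseteq> A x" using xy by (auto simp: A_def)
    moreover have "finite (A x)" using xy by (intro A_fin) auto
    ultimately show "card (A y) \<le> card (A x)" by (simp add: card_mono)
  qed (rule sorted_wrt_upt)
  show "dom (xi Q) = young_cells lam"
  proof (rule set_eqI)
    fix x :: "nat \<times> nat"
    obtain k c where x: "x = (k, c)" by (cases x)
    have "x \<in> young_cells lam \<longleftrightarrow> 1 \<le> k \<and> k \<le> length \<sigma> \<and> 1 \<le> c \<and> c \<le> card (A k)"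
    proof -
      have ln: "length lam = length \<sigma>" unfolding lam_def length_map length_upt by simp
      have ln2: "lam ! (k - 1) = card (A k)" if "1 \<le> k" "k \<le> length \<sigma>"
        using that nth_upt[of "Suc 0" "k - 1" "Suc (length \<sigma>)"] by (simp add: lam_def del: upt_Suc)
      show ?thesis unfolding x young_cells_def using ln ln2 by auto
    qed
    also have "\<dots> \<longleftrightarrow> 1 \<le> k \<and> k \<le> length \<sigma> \<and> c \<in> A k"
      using A_int by (metis atLeastAtMost_iff)
    also have "\<dots> \<longleftrightarrow> 1 \<le> k \<and> k \<le> H c"
    proof -
      have "1 \<le> c" if "k \<le> H c" "1 \<le> k" using H_0[of c] that by (cases "c = 0") auto
      then show ?thesis using H_le[of c] by (auto simp: A_def)
    qed
    finally show "x \<in> dom (xi Q) \<longleftrightarrow> x \<in> young_cells lam" using dom_xi_H x by simp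
  qed
  show "pos_entries (xi Q)"
    unfolding pos_entries_def
  proof (intro allI impI)
    fix p a assume "xi Q p = Some a"
    then have "xcond (dom Q) p" "Q (xsrc (dom Q) p) = Some a"
      using xi_eq[OF finQ] by (auto split: if_splits)
    then show "1 \<le> a" using pe unfolding pos_entries_def by blast
  qed
  show "row_weak (xi Q)"
    unfolding row_weak_def
  proof (intro allI impI)
    fix k c a b assume a: "xi Q (k, c) = Some a" and b: "xi Q (k, Suc c) = Some b"
    then have xc: "xcond (dom Q) (k, c)" "xcond (dom Q) (k, Suc c)"
      and va: "Q (xsrc (dom Q) (k, c)) = Some a" and vb: "Q (xsrc (dom Q) (k, Suc c)) = Some b"
      using xi_eq[OF finQ] by (auto split: if_splits)
    have c1: "1 \<le> c" using xcond_snd[OF finQ xc(1)] by simp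
    define R1 where "R1 = fst (xsrc (dom Q) (k, c))"
    define R2 where "R2 = fst (xsrc (dom Q) (k, Suc c))"
    have "{r0. (r0, Suc c) \<in> LD (dom Q)} \<subseteq> {r0. (r0, c) \<in> LD (dom Q)}"
      using c1 unfolding rowset by auto
    moreover have "k - 1 < card {r0. (r0, Suc c) \<in> LD (dom Q)}"
      using xc(2) finite_rows_LD[OF finQ] by (auto simp: xcond_def upc_def rws_def)
    ultimately have "R1 \<le> R2"
      using sorted_list_subset_nth[OF finite_rows_LD[OF finQ]] unfolding R1_def R2_def xsrc_fst rws_def
      by simp
    then consider "R1 = R2" | "R1 < R2" by arith
    then show "a \<le> b"
    proof cases
      case 1
      have "snd (xsrc (dom Q) (k, Suc c)) = Suc (snd (xsrc (dom Q) (k, c)))"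
        using xsrc_snd[of "dom Q" "(k, c)"] xsrc_snd[of "dom Q" "(k, Suc c)"] 1 c1
        unfolding R1_def R2_def by simp
      then show ?thesis using rw va vb 1 unfolding row_weak_def R1_def R2_def
        by (metis prod.collapse)
    next
      case 2
      then show ?thesis using rows_lt[of R1 _ a R2 _ b] va vb unfolding R1_def R2_def
        by (metis prod.collapse less_imp_le)
    qed
  qed
  show "col_strict (xi Q)"
    unfolding col_strict_def
  proof (intro allI impI)
    fix k c a b assume a: "xi Q (k, c) = Some a" and b: "xi Q (Suc k, c) = Some b"
    then have xc: "xcond (dom Q) (k, c)" "xcond (dom Q) (Suc k, c)"
      and va: "Q (xsrc (dom Q) (k, c)) = Some a" and vb: "Q (xsrc (dom Q) (Suc k, c)) = Some b"
      using xi_eq[OF finQ] by (auto split: if_splits)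
    have k1: "1 \<le> k" "Suc k \<le> length (rws (LD (dom Q)) c)" using xc by (auto simp: xcond_def upc_def)
    have "sorted_wrt (<) (rws (LD (dom Q)) c)" unfolding rws_def by (rule strict_sorted_list_of_set)
    then have "rws (LD (dom Q)) c ! (k - 1) < rws (LD (dom Q)) c ! k"
      using k1 sorted_wrt_nth_less[of "(<)" "rws (LD (dom Q)) c" "k - 1" k] by simp
    then have "fst (xsrc (dom Q) (k, c)) < fst (xsrc (dom Q) (Suc k, c))" by (simp add: xsrc_fst)
    then show "a < b" using rows_lt va vb by (metis prod.collapse)
  qed
qed

end

theorem corollary6p3:
  assumes "is_qrt Q"
  shows "is_young (xi Q) \<and>
         (\<forall>i Q'. 1 \<le> i \<longrightarrow> qfT i Q = Some Q' \<longrightarrow> kfT i (xi Q) = Some (xi Q'))"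
proof -
  obtain \<sigma> where h: "\<forall>x\<in>set \<sigma>. 0 < x" "dom Q = qr_cells \<sigma>" "pos_entries Q" "row_weak Q" "col_strict Q"
    using assms unfolding is_qrt_def by blast
  interpret qrt \<sigma> Q using h by unfold_locales
  show ?thesis
  proof (intro conjI allI impI)
    show "is_young (xi Q)" using young_xi h(3) by blast
    fix i Q' assume "1 \<le> i" "qfT i Q = Some Q'"
    then obtain u' where "qf i (colreading Q) = Some u'" "Q' = fill (dom Q) u'"
      unfolding qfT_def by auto
    then show "kfT i (xi Q) = Some (xi Q')" using crystal by simp
  qed
qed

end
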